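(* Let $(\Omega,\mathcal{F})$ be a measurable space and $\mathcal{P}=\{P_1,\dots,P_K\}$ ($K\ge2$) a finite set of probability measures on it, with $\hat{\mathbb{E}}[Z]=\max_{1\le i\le K}E_{P_i}[Z]$. Let $X,Y$ be random variables with $\hat{\mathbb{E}}[X^2]+\hat{\mathbb{E}}[Y^2]<\infty$. Then $$\overline{C}(X,Y)=\max_{1\le i<j\le K}\overline{C}_{ij}(X,Y),$$ where $\overline{C}_{ij}(X,Y)$ denotes the upper covariance of $X$ and $Y$ under the two-element set $\{P_i,P_j\}$.
   Context: For a set $\mathcal{Q}$ of probability measures with $\hat{\mathbb{E}}_{\mathcal{Q}}[Z]=\sup_{P\in\mathcal{Q}}E_P[Z]$ and a random variable $W$ with $\hat{\mathbb{E}}_{\mathcal{Q}}[W^2]<\infty$: $\overline{\mu}_W=\hat{\mathbb{E}}_{\mathcal{Q}}[W]$, $\underline{\mu}_W=-\hat{\mathbb{E}}_{\mathcal{Q}}[-W]$, $M_W=[\underline{\mu}_W,\overline{\mu}_W]$, and the upper covariance under $\mathcal{Q}$ is $\max_{\mu_2\in M_Y}\min_{\mu_1\in M_X}\hat{\mathbb{E}}_{\mathcal{Q}}[(X-\mu_1)(Y-\mu_2)]$. $\overline{C}(X,Y)$ is this quantity for $\mathcal{Q}=\mathcal{P}$ and $\overline{C}_{ij}(X,Y)$ for $\mathcal{Q}=\{P_i,P_j\}$. *)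

theory Defs
  imports "HOL-Probability.Probability"
begin

definition upper_exp :: "'a measure set \<Rightarrow> ('a \<Rightarrow> real) \<Rightarrow> real" where
  "upper_exp Q Z = (SUP P\<in>Q. integral\<^sup>L P Z)"

definition upper_mean :: "'a measure set \<Rightarrow> ('a \<Rightarrow> real) \<Rightarrow> real" where
  "upper_mean Q W = upper_exp Q W"

definition lower_mean :: "'a measure set \<Rightarrow> ('a \<Rightarrow> real) \<Rightarrow> real" where
  "lower_mean Q W = - upper_exp Q (\<lambda>\<omega>. - W \<omega>)"

text \<open>Upper covariance: max over mu2 in M_Y of min over mu1 in M_X of
  upper_exp Q ((X - mu1)(Y - mu2)).  The max/min are written as SUP/INF
  over the compact intervals (they are attained by continuity).\<close>
definition upper_cov :: "'a measure set \<Rightarrow> ('a \<Rightarrow> real) \<Rightarrow> ('a \<Rightarrow> real) \<Rightarrow> real" where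
  "upper_cov Q X Y =
     (SUP \<mu>2\<in>{lower_mean Q Y..upper_mean Q Y}.
        INF \<mu>1\<in>{lower_mean Q X..upper_mean Q X}.
          upper_exp Q (\<lambda>\<omega>. (X \<omega> - \<mu>1) * (Y \<omega> - \<mu>2)))"

end

theory Submission
  imports Defs
begin

definition gg :: "(nat\<Rightarrow>real) \<Rightarrow> (nat\<Rightarrow>real) \<Rightarrow> (nat\<Rightarrow>real) \<Rightarrow> nat \<Rightarrow> real \<Rightarrow> real \<Rightarrow> real" where
  "gg a b d k x y = d k + (a k - x) * (b k - y)"
definition FF :: "(nat\<Rightarrow>real) \<Rightarrow> (nat\<Rightarrow>real) \<Rightarrow> (nat\<Rightarrow>real) \<Rightarrow> nat set \<Rightarrow> real \<Rightarrow> real \<Rightarrow> real" where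
  "FF a b d S x y = Max ((\<lambda>k. gg a b d k x y) ` S)"
definition cv :: "(nat\<Rightarrow>real) \<Rightarrow> (nat\<Rightarrow>real) \<Rightarrow> (nat\<Rightarrow>real) \<Rightarrow> real \<Rightarrow> nat \<Rightarrow> nat \<Rightarrow> real" where
  "cv a b d l i j = l * d i + (1-l) * d j + l*(1-l)*(a i - a j)*(b i - b j)"
definition Ur :: "(nat\<Rightarrow>real) \<Rightarrow> (nat\<Rightarrow>real) \<Rightarrow> (nat\<Rightarrow>real) \<Rightarrow> nat set \<Rightarrow> real" where
  "Ur a b d S = (SUP y\<in>{Min(b`S)..Max(b`S)}. INF x\<in>{Min(a`S)..Max(a`S)}. FF a b d S x y)"

lemma key_ineq:
  fixes uu vv eA eB fA fB V :: real
  assumes "uu > 0" "vv > 0"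
    and "(vv/(uu+vv)) * eA + (1 - vv/(uu+vv)) * eB + (vv/(uu+vv)) * (1 - vv/(uu+vv)) * (fA-fB) * (uu+vv) \<le> V"
  shows "fA - (V-eA)/uu \<le> fB - (V-eB)/(-vv)"
proof -
  have e: "1 - vv/(uu+vv) = uu/(uu+vv)" using assms by (simp add: field_simps)
  have st: "uu+vv > 0" using assms by simp
  have "((vv/(uu+vv)) * eA + (uu/(uu+vv)) * eB + (vv/(uu+vv)) * (uu/(uu+vv)) * (fA-fB) * (uu+vv))  *  (uu+vv)
      = vv * eA + uu * eB + vv * uu * (fA-fB)"
  proof -
    have 1: "(vv/(uu+vv)) * eA * (uu+vv) = vv * eA" "(uu/(uu+vv)) * eB * (uu+vv) = uu * eB"
      "(vv/(uu+vv)) * (uu/(uu+vv)) * (fA-fB) * (uu+vv) * (uu+vv) = vv * uu * (fA-fB)" using st by simp_all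
    show ?thesis using 1 by (simp add: algebra_simps)
  qed
  moreover have "((vv/(uu+vv)) * eA + (uu/(uu+vv)) * eB + (vv/(uu+vv)) * (uu/(uu+vv)) * (fA-fB) * (uu+vv))  *  (uu+vv) \<le> V * (uu+vv)"
    using assms(3) e st by (intro mult_right_mono) auto
  ultimately have h: "vv * eA + uu * eB + vv * uu * (fA-fB) \<le> V * (uu+vv)" by simp
  have "fA - (V-eA)/uu - (fB - (V-eB)/(-vv)) = (vv * eA + uu * eB + vv * uu * (fA-fB) - V * (uu+vv))/(uu * vv)"
    using assms by (simp add: field_simps)
  also have "\<dots> \<le> 0" using h assms by (simp add: divide_le_0_iff)
  finally show ?thesis by simp
qed

lemma cv_same: "cv a b d l k k = d k" by (simp add: cv_def algebra_simps)
lemma cv_one: "cv a b d 1 k m = d k" by (simp add: cv_def)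

lemma comb_identity:
  assumes "y = l * b i + (1-l) * b j"
  shows "l * gg a b d i x y + (1-l) * gg a b d j x y = cv a b d l i j"
  unfolding gg_def cv_def assms by (simp add: algebra_simps)

lemma lemma_A:
  assumes "finite S" "i \<in> S" "j \<in> S" "0 \<le> l" "l \<le> 1" "y = l * b i + (1-l) * b j"
  shows "cv a b d l i j \<le> FF a b d S x y"
proof -
  let ?M = "FF a b d S x y"
  have "gg a b d i x y \<le> ?M" "gg a b d j x y \<le> ?M" using assms unfolding FF_def by auto
  hence "l * gg a b d i x y + (1-l) * gg a b d j x y \<le> l * ?M + (1-l) * ?M"
    using assms by (intro add_mono mult_left_mono) auto
  thus ?thesis using comb_identity[OF assms(6)] by (simp add: algebra_simps)
qed

lemma lemma_B:
  assumes fin: "finite S" and ne: "S \<noteq> {}"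
    and hV: "\<And>k m l. k \<in> S \<Longrightarrow> m \<in> S \<Longrightarrow> 0 \<le> l \<Longrightarrow> l \<le> 1 \<Longrightarrow> cv a b d l k m \<le> V"
  shows "\<exists>x\<in>{Min(a`S)..Max(a`S)}. \<forall>k\<in>S. gg a b d k x y \<le> V"
proof -
  define s where "s k = b k - y" for k
  define L where "L = (\<lambda>k. a k - (V - d k)/s k) ` {k\<in>S. s k > 0}"
  define x where "x = Max (insert (Min (a`S)) L)"
  have finL: "finite L" using fin unfolding L_def by auto
  have dV: "d k \<le> V" if "k \<in> S" for k using hV[OF that that, of 1] by (simp add: cv_same)
  have amin: "Min (a`S) \<le> a k" "a k \<le> Max (a`S)" if "k\<in>S" for k using fin that by auto
  have x_ge: "x \<ge> Min (a`S)" unfolding x_def using finL by simp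
  have x_geL: "x \<ge> a k - (V - d k)/s k" if "k \<in> S" "s k > 0" for k
    unfolding x_def using finL that by (auto simp: L_def)
  have x_le: "x \<le> Max (a`S)"
  proof -
    have "l \<le> Max (a`S)" if "l \<in> L" for l
    proof -
      from that obtain k where k: "k\<in>S" "s k > 0" "l = a k - (V - d k)/s k" unfolding L_def by auto
      have "(V - d k)/s k \<ge> 0" using dV[OF k(1)] k(2) by simp
      thus ?thesis using amin(2)[OF k(1)] k(3) by linarith
    qed
    moreover have "Min (a`S) \<le> Max (a`S)" using fin ne amin by (meson all_not_in_conv order_trans)
    ultimately show ?thesis unfolding x_def using finL by simp
  qed
  have "gg a b d k x y \<le> V" if k: "k \<in> S" for k
  proof (cases "s k > 0")
    case True
    have "(a k - x) \<le> (V - d k)/s k" using x_geL[OF k True] by simp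
    hence "(a k - x) * s k \<le> V - d k" using True by (simp add: pos_le_divide_eq)
    thus ?thesis unfolding gg_def s_def by simp
  next
    case False
    show ?thesis
    proof (cases "s k = 0")
      case True thus ?thesis using dV[OF k] unfolding gg_def s_def by simp
    next
      case F2: False
      hence neg: "s k < 0" using False by simp
      have xr: "x \<le> a k - (V - d k)/s k"
      proof -
        have r0: "a k \<le> a k - (V - d k)/s k" using dV[OF k] neg by (simp add: divide_nonneg_neg)
        have "l \<le> a k - (V - d k)/s k" if "l \<in> insert (Min (a`S)) L" for l
        proof (cases "l = Min (a`S)")
          case True thus ?thesis using amin(1)[OF k] r0 by linarith
        next
          case False
          with that obtain m where m: "m\<in>S" "s m > 0" "l = a m - (V - d m)/s m" unfolding L_def by auto
          define t where "t = - s k"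
          have t: "t > 0" using neg t_def by simp
          define l0 where "l0 = t/(s m + t)"
          have l0: "0 \<le> l0" "l0 \<le> 1" using t m(2) by (auto simp: l0_def)
          have bb: "b m - b k = s m + t" unfolding t_def s_def by simp
          have "cv a b d l0 m k \<le> V" using hV[OF m(1) k l0] .
          hence "l0*d m + (1 - l0)*d k + l0*(1 - l0)*(a m - a k)*(s m + t) \<le> V"
            unfolding cv_def bb .
          from key_ineq[OF m(2) t this[unfolded l0_def]]
          show ?thesis using m(3) t_def by simp
        qed
        thus ?thesis unfolding x_def using finL by simp
      qed
      have "(a k - x) \<ge> (V - d k)/s k" using xr by simp
      hence "(a k - x) * s k \<le> V - d k" using neg by (simp add: neg_divide_le_eq mult.commute)
      thus ?thesis unfolding gg_def s_def by simp
    qed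
  qed
  thus ?thesis using x_ge x_le by (intro bexI[of _ x]) auto
qed

lemma MinMax: assumes "finite A" "A \<noteq> {}" shows "Min A \<le> (Max A::real)"
proof -
  obtain x where x: "x \<in> A" using assms by auto
  have "Min A \<le> x" "x \<le> Max A" using assms(1) x by simp_all
  thus ?thesis by linarith
qed

lemma F1:
  fixes b :: "nat \<Rightarrow> real"
  assumes fin: "finite S" and ne: "S \<noteq> {}" and y: "y \<in> {Min(b`S)..Max(b`S)}"
  shows "\<exists>i\<in>S. \<exists>j\<in>S. \<exists>l. 0 \<le> l \<and> l \<le> 1 \<and> y = l*b i + (1-l)*b j"
proof -
  have "Min (b`S) \<in> b`S" "Max (b`S) \<in> b`S" using fin ne by simp_all
  then obtain i j where i: "i \<in> S" "b i = Min (b`S)" and j: "j \<in> S" "b j = Max (b`S)"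
    by (metis imageE)
  have yb: "b i \<le> y" "y \<le> b j" using y i j by simp_all
  show ?thesis
  proof (cases "b i = b j")
    case True
    hence "y = b i" using yb by linarith
    hence "y = 1 * b i + (1-1) * b j" by simp
    thus ?thesis using i j by (intro bexI[of _ i] bexI[of _ j] exI[of _ 1]) auto
  next
    case False
    hence lt: "b i < b j" using yb by linarith
    define l where "l = (b j - y)/(b j - b i)"
    have "0 \<le> l" "l \<le> 1" using yb lt by (simp_all add: l_def divide_simps)
    moreover have "y = l*b i + (1-l)*b j"
    proof -
      have "l*(b j - b i) = b j - y" using lt unfolding l_def by simp
      thus ?thesis by (simp add: algebra_simps)
    qed
    ultimately show ?thesis using i j by blast
  qed
qed

lemma F2:
  assumes fin: "finite S" and ne: "S \<noteq> {}" and y: "y \<in> {Min(b`S)..Max(b`S)}"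
  shows "bdd_below ((\<lambda>x. FF a b d S x y) ` A)"
proof -
  obtain i j l where "i\<in>S" "j\<in>S" "0 \<le> l" "l \<le> 1" "y = l*b i + (1-l)*b j"
    using F1[OF fin ne y] by blast
  from lemma_A[OF fin this] show ?thesis by (intro bdd_belowI[of _ "cv a b d l i j"]) auto
qed

lemma F3:
  assumes fin: "finite S" and ne: "S \<noteq> {}" and y: "y \<in> {Min(b`S)..Max(b`S)}"
  shows "(INF x\<in>{Min(a`S)..Max(a`S)}. FF a b d S x y)
     \<le> Max ((\<lambda>k. \<bar>d k\<bar>)`S) + (Max(a`S)-Min(a`S))*(Max(b`S)-Min(b`S))"
proof -
  have amm: "Min(a`S) \<le> Max(a`S)" using fin ne by (intro MinMax) auto
  have "(INF x\<in>{Min(a`S)..Max(a`S)}. FF a b d S x y) \<le> FF a b d S (Min(a`S)) y"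
    using F2[OF fin ne y] amm by (intro cINF_lower) simp_all
  also have "\<dots> \<le> Max ((\<lambda>k. \<bar>d k\<bar>)`S) + (Max(a`S)-Min(a`S))*(Max(b`S)-Min(b`S))"
    unfolding FF_def
  proof (rule Max.boundedI)
    show "finite ((\<lambda>k. gg a b d k (Min (a ` S)) y) ` S)" using fin by simp
    show "(\<lambda>k. gg a b d k (Min (a ` S)) y) ` S \<noteq> {}" using ne by simp
    fix g assume "g \<in> (\<lambda>k. gg a b d k (Min (a ` S)) y) ` S"
    then obtain k where k: "k \<in> S" and gk: "g = gg a b d k (Min (a ` S)) y" by blast
    have "d k \<le> Max ((\<lambda>k. \<bar>d k\<bar>)`S)" 
    proof -
      have "\<bar>d k\<bar> \<le> Max ((\<lambda>k. \<bar>d k\<bar>)`S)" using fin k by simp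
      thus ?thesis using abs_ge_self[of "d k"] by linarith
    qed
    moreover have "(a k - Min(a`S)) * (b k - y) \<le> (Max(a`S)-Min(a`S))*(Max(b`S)-Min(b`S))"
    proof -
      have "(a k - Min(a`S)) * (b k - y) \<le> \<bar>a k - Min(a`S)\<bar> * \<bar>b k - y\<bar>"
        using abs_ge_self[of "(a k - Min(a`S)) * (b k - y)"] by (simp only: abs_mult)
      also have "\<dots> \<le> (Max(a`S)-Min(a`S))*(Max(b`S)-Min(b`S))"
      proof (intro mult_mono)
        have h: "Min(a`S) \<le> a k" "a k \<le> Max(a`S)" "Min(b`S) \<le> b k" "b k \<le> Max(b`S)"
          using fin k by simp_all
        show "\<bar>a k - Min(a`S)\<bar> \<le> Max(a`S)-Min(a`S)" using h unfolding abs_le_iff by linarith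
        show "\<bar>b k - y\<bar> \<le> Max(b`S)-Min(b`S)" using h y unfolding abs_le_iff atLeastAtMost_iff by linarith
      qed (use amm in auto)
      finally show ?thesis .
    qed
    ultimately show "g \<le> Max ((\<lambda>k. \<bar>d k\<bar>)`S) + (Max(a`S)-Min(a`S))*(Max(b`S)-Min(b`S))"
      unfolding gk gg_def by linarith
  qed
  finally show ?thesis .
qed

lemma UB:
  assumes fin: "finite S" and ne: "S \<noteq> {}"
    and hV: "\<And>k m l. k \<in> S \<Longrightarrow> m \<in> S \<Longrightarrow> 0 \<le> l \<Longrightarrow> l \<le> 1 \<Longrightarrow> cv a b d l k m \<le> V"
  shows "Ur a b d S \<le> V"
  unfolding Ur_def
proof (rule cSUP_least)
  show "{Min(b`S)..Max(b`S)} \<noteq> {}" using fin ne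
    using MinMax[of "b`S"] by simp
  fix y assume y: "y \<in> {Min(b`S)..Max(b`S)}"
  obtain x where x: "x\<in>{Min(a`S)..Max(a`S)}" "\<forall>k\<in>S. gg a b d k x y \<le> V"
    using lemma_B[OF fin ne hV] by blast
  have "(INF x\<in>{Min(a`S)..Max(a`S)}. FF a b d S x y) \<le> FF a b d S x y"
    using F2[OF fin ne y] x by (intro cINF_lower) auto
  also have "\<dots> \<le> V" unfolding FF_def using x fin ne by simp
  finally show "(INF x\<in>{Min(a`S)..Max(a`S)}. FF a b d S x y) \<le> V" .
qed

lemma LB:
  assumes fin: "finite S" and i: "i \<in> S" and j: "j \<in> S" and l: "0 \<le> l" "l \<le> 1"
  shows "cv a b d l i j \<le> Ur a b d S"
proof -
  have ne: "S \<noteq> {}" using i by auto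
  define y where "y = l*b i + (1-l)*b j"
  have y: "y \<in> {Min(b`S)..Max(b`S)}"
  proof -
    have "Min(b`S) \<le> b i" "Min(b`S) \<le> b j" "b i \<le> Max(b`S)" "b j \<le> Max(b`S)" using fin i j by auto
    hence "l*Min(b`S) + (1-l)*Min(b`S) \<le> y" "y \<le> l*Max(b`S) + (1-l)*Max(b`S)"
      unfolding y_def using l by (auto intro!: add_mono mult_left_mono)
    thus ?thesis by (simp add: algebra_simps)
  qed
  have amm: "{Min(a`S)..Max(a`S)} \<noteq> {}" using fin ne
    using MinMax[of "a`S"] by simp
  have "cv a b d l i j \<le> (INF x\<in>{Min(a`S)..Max(a`S)}. FF a b d S x y)"
    using amm by (intro cINF_greatest lemma_A[OF fin i j l]) (auto simp: y_def)
  also have "\<dots> \<le> Ur a b d S" unfolding Ur_def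
  proof (rule cSUP_upper[OF y])
    show "bdd_above ((\<lambda>y. INF x\<in>{Min(a`S)..Max(a`S)}. FF a b d S x y) ` {Min(b`S)..Max(b`S)})"
      using F3[OF fin ne] by (intro bdd_aboveI2) blast
  qed
  finally show ?thesis .
qed

lemma main_real:
  assumes K: "K \<ge> (2::nat)"
  shows "Ur a b d {1..K} = Max {Ur a b d {i,j} | i j. 1 \<le> i \<and> i < j \<and> j \<le> K}"
proof -
  define T where "T = {Ur a b d {i,j} | i j. 1 \<le> i \<and> i < j \<and> j \<le> K}"
  have finT: "finite T"
  proof (rule finite_subset)
    show "T \<subseteq> (\<lambda>(i,j). Ur a b d {i,j}) ` ({1..K}\<times>{1..K})" unfolding T_def by force
  qed simp
  have inT: "Ur a b d {k,m} \<in> T" if "k\<in>{1..K}" "m\<in>{1..K}" "k\<noteq>m" for k m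
  proof (cases "k < m")
    case True thus ?thesis using that unfolding T_def by auto
  next
    case False
    hence "m < k" using that by simp
    moreover have "{k,m} = {m,k}" by auto
    ultimately show ?thesis using that unfolding T_def by fastforce
  qed
  have neT: "T \<noteq> {}" using inT[of 1 2] K by auto
  have pairLB: "cv a b d l k m \<le> Max T" if "k\<in>{1..K}" "m\<in>{1..K}" "k\<noteq>m" "0\<le>l" "l\<le>1" for k m l
  proof -
    have "cv a b d l k m \<le> Ur a b d {k,m}" using that by (intro LB) auto
    also have "\<dots> \<le> Max T" using inT[OF that(1-3)] finT by simp
    finally show ?thesis .
  qed
  have le1: "Ur a b d {1..K} \<le> Max T"
  proof (rule UB)
    fix k m and l :: real assume km: "k \<in> {1..K}" "m \<in> {1..K}" "0 \<le> l" "l \<le> 1"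
    show "cv a b d l k m \<le> Max T"
    proof (cases "k = m")
      case False thus ?thesis using pairLB km by blast
    next
      case True
      define m' where "m' = (if k = 1 then 2 else (1::nat))"
      have m': "m' \<in> {1..K}" "k \<noteq> m'" using km K unfolding m'_def by auto
      have "cv a b d l k m = cv a b d 1 k m'" using True by (simp add: cv_same cv_one)
      also have "\<dots> \<le> Max T" using pairLB[OF km(1) m'(1) m'(2)] by simp
      finally show ?thesis .
    qed
  qed (use K in auto)
  have le2: "Max T \<le> Ur a b d {1..K}"
  proof -
    have "Max T \<in> T" using finT neT by simp
    then obtain i j where ij: "Max T = Ur a b d {i,j}" "1 \<le> i" "i < j" "j \<le> K" unfolding T_def by blast
    have "Ur a b d {i,j} \<le> Ur a b d {1..K}"
    proof (rule UB)
      fix k m and l :: real assume km: "k \<in> {i,j}" "m \<in> {i,j}" "0 \<le> l" "l \<le> 1"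
      show "cv a b d l k m \<le> Ur a b d {1..K}" using km ij by (intro LB) auto
    qed auto
    thus ?thesis using ij by simp
  qed
  show ?thesis using le1 le2 unfolding T_def by simp
qed

lemma neg_max_min:
  fixes w :: "nat \<Rightarrow> real"
  assumes "finite S" "S \<noteq> {}"
  shows "- Max ((\<lambda>i. - w i) ` S) = Min (w ` S)"
proof -
  have "Min (w ` S) = Inf (w ` S)" using assms by (simp add: cInf_eq_Min)
  also have "\<dots> = - Sup (uminus ` w ` S)" by (simp add: Inf_real_def)
  also have "\<dots> = - Max ((\<lambda>i. - w i) ` S)" using assms by (simp add: cSup_eq_Max image_image)
  finally show ?thesis by simp
qed

lemma upper_exp_img:
  assumes "finite S" "S \<noteq> {}"
  shows "upper_exp (P ` S) Z = Max ((\<lambda>i. integral\<^sup>L (P i) Z) ` S)"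
  unfolding upper_exp_def using assms by (simp add: image_image cSup_eq_Max)

lemma abs_prod_le: "\<bar>x * y\<bar> \<le> (x::real)\<^sup>2 + y\<^sup>2"
proof -
  have "0 \<le> (\<bar>x\<bar> - \<bar>y\<bar>)\<^sup>2" by simp
  hence "2 * (\<bar>x\<bar> * \<bar>y\<bar>) \<le> \<bar>x\<bar>\<^sup>2 + \<bar>y\<bar>\<^sup>2" by (simp add: power2_diff)
  moreover have "0 \<le> \<bar>x\<bar> * \<bar>y\<bar>" by simp
  moreover have "\<bar>x*y\<bar> = \<bar>x\<bar> * \<bar>y\<bar>" by (simp add: abs_mult)
  ultimately show ?thesis by simp
qed

theorem proposition4p2:
  fixes M :: "'a measure" and P :: "nat \<Rightarrow> 'a measure" and K :: nat
    and X Y :: "'a \<Rightarrow> real"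
  assumes "K \<ge> 2"
    and "\<And>i. i \<in> {1..K} \<Longrightarrow> prob_space (P i)"
    and "\<And>i. i \<in> {1..K} \<Longrightarrow> sets (P i) = sets M"
    and "X \<in> borel_measurable M" and "Y \<in> borel_measurable M"
    and "\<And>i. i \<in> {1..K} \<Longrightarrow> integrable (P i) (\<lambda>\<omega>. (X \<omega>)\<^sup>2)"
    and "\<And>i. i \<in> {1..K} \<Longrightarrow> integrable (P i) (\<lambda>\<omega>. (Y \<omega>)\<^sup>2)"
  shows "upper_cov (P ` {1..K}) X Y
           = Max {upper_cov {P i, P j} X Y | i j. 1 \<le> i \<and> i < j \<and> j \<le> K}"
proof -
  define a where "a i = integral\<^sup>L (P i) X" for i
  define b where "b i = integral\<^sup>L (P i) Y" for i
  define d where "d i = integral\<^sup>L (P i) (\<lambda>\<omega>. X \<omega> * Y \<omega>) - a i * b i" for i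
  have integ: "integral\<^sup>L (P i) (\<lambda>\<omega>. (X \<omega> - x) * (Y \<omega> - y)) = gg a b d i x y"
    if i: "i \<in> {1..K}" for i x y
  proof -
    interpret prob_space "P i" using assms(2)[OF i] .
    have mX: "X \<in> borel_measurable (P i)" unfolding measurable_cong_sets[OF assms(3)[OF i] refl] by (rule assms(4))
    have mY: "Y \<in> borel_measurable (P i)" unfolding measurable_cong_sets[OF assms(3)[OF i] refl] by (rule assms(5))
    have iX: "integrable (P i) X" by (rule square_integrable_imp_integrable[OF mX assms(6)[OF i]])
    have iY: "integrable (P i) Y" by (rule square_integrable_imp_integrable[OF mY assms(7)[OF i]])
    have iXY: "integrable (P i) (\<lambda>\<omega>. X \<omega> * Y \<omega>)"
    proof (rule Bochner_Integration.integrable_bound)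
      show "integrable (P i) (\<lambda>\<omega>. (X \<omega>)\<^sup>2 + (Y \<omega>)\<^sup>2)" using assms(6,7)[OF i] by simp
      show "(\<lambda>\<omega>. X \<omega> * Y \<omega>) \<in> borel_measurable (P i)" using mX mY by simp
      show "AE \<omega> in P i. norm (X \<omega> * Y \<omega>) \<le> norm ((X \<omega>)\<^sup>2 + (Y \<omega>)\<^sup>2)"
        using abs_prod_le by simp
    qed
    have "(\<lambda>\<omega>. (X \<omega> - x) * (Y \<omega> - y)) = (\<lambda>\<omega>. (X \<omega> * Y \<omega> - y * X \<omega>) - (x * Y \<omega> - x * y))"
      by (auto simp: algebra_simps)
    hence "integral\<^sup>L (P i) (\<lambda>\<omega>. (X \<omega> - x) * (Y \<omega> - y))
       = (integral\<^sup>L (P i) (\<lambda>\<omega>. X \<omega> * Y \<omega>) - y * a i) - (x * b i - x * y)"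
      using iX iY iXY by (simp add: a_def b_def prob_space)
    thus ?thesis unfolding gg_def d_def by (simp add: algebra_simps)
  qed
  have UC: "upper_cov (P ` S) X Y = Ur a b d S" if S: "S \<subseteq> {1..K}" "S \<noteq> {}" for S
  proof -
    have fin: "finite S" using S finite_subset by blast
    have e1: "lower_mean (P ` S) Y = Min (b ` S)" "lower_mean (P ` S) X = Min (a ` S)"
      unfolding lower_mean_def using fin S
      by (simp_all add: upper_exp_img neg_max_min[symmetric] a_def b_def)
    have e2: "upper_mean (P ` S) Y = Max (b ` S)" "upper_mean (P ` S) X = Max (a ` S)"
      unfolding upper_mean_def using fin S by (simp_all add: upper_exp_img a_def b_def)
    have e3: "upper_exp (P ` S) (\<lambda>\<omega>. (X \<omega> - x) * (Y \<omega> - y)) = FF a b d S x y" for x y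
    proof -
      have "upper_exp (P ` S) (\<lambda>\<omega>. (X \<omega> - x) * (Y \<omega> - y))
          = Max ((\<lambda>i. integral\<^sup>L (P i) (\<lambda>\<omega>. (X \<omega> - x) * (Y \<omega> - y))) ` S)"
        using fin S by (simp add: upper_exp_img)
      also have "\<dots> = FF a b d S x y" unfolding FF_def
        using integ S by (intro arg_cong[where f=Max] image_cong) auto
      finally show ?thesis .
    qed
    show ?thesis unfolding upper_cov_def Ur_def e1 e2 e3 ..
  qed
  have pe: "upper_cov {P i, P j} X Y = Ur a b d {i,j}" if "1 \<le> i" "i < j" "j \<le> K" for i j
    using UC[of "{i,j}"] that by simp
  have "{upper_cov {P i, P j} X Y | i j. 1 \<le> i \<and> i < j \<and> j \<le> K}
      = {Ur a b d {i,j} | i j. 1 \<le> i \<and> i < j \<and> j \<le> K}"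
    using pe by (intro Collect_cong) (metis (no_types, lifting))
  moreover have "upper_cov (P ` {1..K}) X Y = Ur a b d {1..K}" using UC[of "{1..K}"] assms(1) by simp
  ultimately show ?thesis using main_real[OF assms(1)] by simp
qed

end
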